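(* Let $X$ be a separated metric compact Hausdorff space with metric $d$ and let $A\subseteq X$ be a closed subset, with the induced topology and metric, so that the inclusion $A\hookrightarrow X$ is an embedding. Let $q_0,q_1\colon X\to P$ be the pushout in $\mathbf{MetCH_{sep}}$ of $A\hookrightarrow X$ along itself. Then the kernel metric of $\binom{q_0}{q_1}\colon X+X\to P$, i.e. $((x,i),(y,j))\mapsto d_P(q_i(x),q_j(y))$, equals $\gamma^A$.
   Context: A metric on a set $X$ is a map $d\colon X\times X\to[0,\infty]$ with $d(x,x)=0$ and $d(x,z)\le d(x,y)+d(y,z)$ (not necessarily symmetric, $\infty$ allowed); separated means $d(x,y)=0=d(y,x)$ implies $x=y$. A separated metric compact Hausdorff space is a compact Hausdorff space with a separated metric continuous $X\times X\to[0,\infty]$ for the upper topology on $[0,\infty]$ (open sets $]u,\infty]$); $\mathbf{MetCH_{sep}}$ is the category of these with continuous non-expansive maps; an embedding is an injective morphism preserving distances. $X+X$ is the coproduct with elements $(x,i)$, $i\in\{0,1\}$. $\gamma^A\colon(X+X)\times(X+X)\to[0,\infty]$ is defined by $\gamma^A((x,i),(y,i))=d(x,y)$ and $\gamma^A((x,i),(y,1-i))=\inf_{a\in A}(d(x,a)+d(a,y))$ for $x,y\in X$, $i\in\{0,1\}$. *)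

theory Defs
  imports "HOL-Analysis.Analysis" "HOL-Library.Extended_Nonnegative_Real"
begin

text \<open>Metrics with values in [0,\<infinity>] are modelled by ennreal.
  A metric on the carrier S: d x x = 0 and the triangle inequality (no symmetry).\<close>
definition is_metric_on :: "'a set \<Rightarrow> ('a \<Rightarrow> 'a \<Rightarrow> ennreal) \<Rightarrow> bool" where
  "is_metric_on S d \<longleftrightarrow>
     (\<forall>x\<in>S. d x x = 0) \<and>
     (\<forall>x\<in>S. \<forall>y\<in>S. \<forall>z\<in>S. d x z \<le> d x y + d y z)"

definition separated_on :: "'a set \<Rightarrow> ('a \<Rightarrow> 'a \<Rightarrow> ennreal) \<Rightarrow> bool" where
  "separated_on S d \<longleftrightarrow> (\<forall>x\<in>S. \<forall>y\<in>S. d x y = 0 \<and> d y x = 0 \<longrightarrow> x = y)"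

text \<open>Continuity of d : X \<times> X \<rightarrow> [0,\<infinity>] for the upper topology on [0,\<infinity>],
  whose open sets are ]u,\<infinity>] (together with the whole space and the empty set).\<close>
definition upper_continuous :: "'a topology \<Rightarrow> ('a \<Rightarrow> 'a \<Rightarrow> ennreal) \<Rightarrow> bool" where
  "upper_continuous T d \<longleftrightarrow>
     (\<forall>u. openin (prod_topology T T)
            {p \<in> topspace T \<times> topspace T. u < d (fst p) (snd p)})"

definition metch_sep :: "'a topology \<Rightarrow> ('a \<Rightarrow> 'a \<Rightarrow> ennreal) \<Rightarrow> bool" where
  "metch_sep T d \<longleftrightarrow> compact_space T \<and> Hausdorff_space T \<and>
     is_metric_on (topspace T) d \<and> separated_on (topspace T) d \<and> upper_continuous T d"

definition metch_mor :: "'a topology \<Rightarrow> ('a \<Rightarrow> 'a \<Rightarrow> ennreal) \<Rightarrow>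
    'b topology \<Rightarrow> ('b \<Rightarrow> 'b \<Rightarrow> ennreal) \<Rightarrow> ('a \<Rightarrow> 'b) \<Rightarrow> bool" where
  "metch_mor T d S e f \<longleftrightarrow> continuous_map T S f \<and>
     (\<forall>x\<in>topspace T. \<forall>y\<in>topspace T. e (f x) (f y) \<le> d x y)"

text \<open>The universal property
  is stated for all test objects whose points lie in the type 'a + 'a (the type of X + X).\<close>
definition is_pushout_incl ::
  "'a topology \<Rightarrow> ('a \<Rightarrow> 'a \<Rightarrow> ennreal) \<Rightarrow> 'a set \<Rightarrow>
   'p topology \<Rightarrow> ('p \<Rightarrow> 'p \<Rightarrow> ennreal) \<Rightarrow> ('a \<Rightarrow> 'p) \<Rightarrow> ('a \<Rightarrow> 'p) \<Rightarrow> bool" where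
  "is_pushout_incl X d A P dP q0 q1 \<longleftrightarrow>
     metch_sep P dP \<and> metch_mor X d P dP q0 \<and> metch_mor X d P dP q1 \<and>
     (\<forall>a\<in>A. q0 a = q1 a) \<and>
     (\<forall>(Y :: ('a + 'a) topology) e f0 f1.
        metch_sep Y e \<and> metch_mor X d Y e f0 \<and> metch_mor X d Y e f1 \<and>
        (\<forall>a\<in>A. f0 a = f1 a) \<longrightarrow>
          (\<exists>u. metch_mor P dP Y e u \<and>
               (\<forall>x\<in>topspace X. u (q0 x) = f0 x \<and> u (q1 x) = f1 x)) \<and>
          (\<forall>u v. metch_mor P dP Y e u \<and>
               (\<forall>x\<in>topspace X. u (q0 x) = f0 x \<and> u (q1 x) = f1 x) \<and>
               metch_mor P dP Y e v \<and>
               (\<forall>x\<in>topspace X. v (q0 x) = f0 x \<and> v (q1 x) = f1 x) \<longrightarrow>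
               (\<forall>p\<in>topspace P. u p = v p)))"

text \<open>The metric gamma^A on X + X (copies Inl = index 0, Inr = index 1).\<close>
fun gammaA :: "('a \<Rightarrow> 'a \<Rightarrow> ennreal) \<Rightarrow> 'a set \<Rightarrow> 'a + 'a \<Rightarrow> 'a + 'a \<Rightarrow> ennreal" where
  "gammaA d A (Inl x) (Inl y) = d x y"
| "gammaA d A (Inr x) (Inr y) = d x y"
| "gammaA d A (Inl x) (Inr y) = (INF a\<in>A. d x a + d a y)"
| "gammaA d A (Inr x) (Inl y) = (INF a\<in>A. d x a + d a y)"

definition kernel_metric :: "('p \<Rightarrow> 'p \<Rightarrow> ennreal) \<Rightarrow> ('z \<Rightarrow> 'p) \<Rightarrow> 'z \<Rightarrow> 'z \<Rightarrow> ennreal" where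
  "kernel_metric dP h u v = dP (h u) (h v)"

end

theory Submission imports Defs begin
lemma interp:
  fixes w s t :: ennreal
  assumes "w < s + t"
  shows "\<exists>v1 v2. (v1 < s \<or> v1 = 0) \<and> (v2 < t \<or> v2 = 0) \<and> w < v1 + v2"
proof (cases "s = 0")
  case True then have "w < t" using assms by simp
  then obtain v where "w < v" "v < t" using dense by blast
  then show ?thesis by (intro exI[of _ 0] exI[of _ v]) auto
next
  case s0: False
  show ?thesis
  proof (cases "t = 0")
    case True then have "w < s" using assms by simp
    then obtain v where "w < v" "v < s" using dense by blast
    then show ?thesis by (intro exI[of _ v] exI[of _ 0]) auto
  next
    case t0: False
    show ?thesis
    proof (cases "w < s")
      case True then obtain v where "w < v" "v < s" using dense by blast
      then show ?thesis by (intro exI[of _ v] exI[of _ 0]) auto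
    next
      case ws: False
      show ?thesis
      proof (cases "w < t")
        case True then obtain v where "w < v" "v < t" using dense by blast
        then show ?thesis by (intro exI[of _ 0] exI[of _ v]) auto
      next
        case wt: False
        have sw: "s \<le> w" "t \<le> w" using ws wt by auto
        have wtop: "w \<noteq> top" using assms by auto
        then have stop: "s \<noteq> top" "t \<noteq> top" using sw by (auto simp: top_unique)
        obtain s' where s': "0 \<le> s'" "s = ennreal s'" using stop(1) ennreal_cases by metis
        obtain t' where t': "0 \<le> t'" "t = ennreal t'" using stop(2) ennreal_cases by metis
        obtain w' where w': "0 \<le> w'" "w = ennreal w'" using wtop ennreal_cases by metis
        have r1: "s' > 0" using s0 s' by (cases "s' = 0") auto
        have r2: "t' > 0" using t0 t' by (cases "t' = 0") auto
        have r3: "s' \<le> w'" using sw(1) s' w' by (simp add: ennreal_le_iff)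
        have r4: "t' \<le> w'" using sw(2) t' w' by (simp add: ennreal_le_iff)
        have st: "s + t = ennreal (s' + t')" using s' t' by simp
        have "ennreal w' < ennreal (s' + t')" using assms st w' by simp
        then have r5: "w' < s' + t'" using w' by (simp add: ennreal_less_iff)
        note r = r1 r2 r3 r4 r5
        define e where "e = (s' + t' - w') / 3"
        have e: "e > 0" "e < s'" "e < t'" using r by (auto simp: e_def)
        have g1: "ennreal (s' - e) < s" using e s' by (auto simp: ennreal_less_iff)
        have g2: "ennreal (t' - e) < t" using e t' by (auto simp: ennreal_less_iff)
        have "ennreal (s' - e) + ennreal (t' - e) = ennreal ((s' - e) + (t' - e))"
          using e by (intro ennreal_plus[symmetric]) auto
        moreover have "w' < (s' - e) + (t' - e)" using r by (simp add: e_def field_simps)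
        ultimately have g3: "w < ennreal (s' - e) + ennreal (t' - e)"
          using w' by (simp add: ennreal_less_iff)
        show ?thesis using g1 g2 g3 by blast
      qed
    qed
  qed
qed

definition lsc :: "'a topology \<Rightarrow> ('a \<Rightarrow> ennreal) \<Rightarrow> bool" where
  "lsc T g \<longleftrightarrow> (\<forall>v. openin T {z \<in> topspace T. v < g z})"

lemma lsc_nbhd:
  assumes "lsc T g" "z \<in> topspace T" "v < g z \<or> v = 0"
  shows "\<exists>U. openin T U \<and> z \<in> U \<and> (\<forall>z'\<in>U. v \<le> g z')"
proof (cases "v = 0")
  case True then show ?thesis using assms by (intro exI[of _ "topspace T"]) auto
next
  case False
  then have "v < g z" using assms by auto
  then show ?thesis using assms unfolding lsc_def
    by (intro exI[of _ "{z \<in> topspace T. v < g z}"]) auto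
qed

lemma lsc_sum:
  assumes "lsc T g" "lsc T h"
  shows "lsc T (\<lambda>z. g z + h z)"
  unfolding lsc_def
proof
  fix v
  show "openin T {z \<in> topspace T. v < g z + h z}"
  proof (subst openin_subopen, intro ballI)
    fix z assume z: "z \<in> {z \<in> topspace T. v < g z + h z}"
    then have "v < g z + h z" by simp
    from interp[OF this] obtain v1 v2 where v: "v1 < g z \<or> v1 = 0" "v2 < h z \<or> v2 = 0" "v < v1 + v2"
      by blast
    obtain U1 where U1: "openin T U1" "z \<in> U1" "\<forall>z'\<in>U1. v1 \<le> g z'"
      using lsc_nbhd[OF assms(1), of z v1] z v(1) by blast
    obtain U2 where U2: "openin T U2" "z \<in> U2" "\<forall>z'\<in>U2. v2 \<le> h z'"
      using lsc_nbhd[OF assms(2), of z v2] z v(2) by blast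
    have "U1 \<inter> U2 \<subseteq> {z \<in> topspace T. v < g z + h z}"
    proof
      fix z' assume "z' \<in> U1 \<inter> U2"
      then have "v1 + v2 \<le> g z' + h z'" "z' \<in> topspace T"
        using U1 U2 openin_subset[OF U1(1)] by (auto intro: add_mono)
      then show "z' \<in> {z \<in> topspace T. v < g z + h z}" using v(3) by auto
    qed
    then show "\<exists>U. openin T U \<and> z \<in> U \<and> U \<subseteq> {z \<in> topspace T. v < g z + h z}"
      using U1 U2 by blast
  qed
qed

lemma lsc_attain:
  assumes K: "compactin T K" "K \<noteq> {}" and g: "lsc T g"
  shows "\<exists>a\<in>K. \<forall>b\<in>K. g a \<le> g b"
proof (rule ccontr)
  assume "\<not> ?thesis"
  then have "\<forall>a\<in>K. \<exists>b\<in>K. g b < g a" by (auto simp: not_le)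
  then obtain b where b: "\<And>a. a \<in> K \<Longrightarrow> b a \<in> K \<and> g (b a) < g a" by metis
  define Op where "Op a = {z \<in> topspace T. g (b a) < g z}" for a
  have KT: "K \<subseteq> topspace T" using K compactin_subset_topspace by blast
  have "\<exists>\<F>. finite \<F> \<and> \<F> \<subseteq> Op ` K \<and> K \<subseteq> \<Union>\<F>"
  proof (rule compactinD[OF K(1)])
    show "\<And>U. U \<in> Op ` K \<Longrightarrow> openin T U" using g unfolding lsc_def Op_def by auto
    show "K \<subseteq> \<Union> (Op ` K)" using b KT unfolding Op_def by blast
  qed
  then obtain B where B: "finite B" "B \<subseteq> K" "K \<subseteq> \<Union> (Op ` B)"
    by (metis finite_subset_image)
  have "B \<noteq> {}" using B K by auto
  define m where "m = Min ((\<lambda>a. g (b a)) ` B)"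
  have "m \<in> (\<lambda>a. g (b a)) ` B"
    using Min_in[of "(\<lambda>a. g (b a)) ` B"] B \<open>B \<noteq> {}\<close> unfolding m_def by blast
  then obtain a0 where a0: "a0 \<in> B" "g (b a0) = m" by auto
  have "b a0 \<in> K" using b a0 B by auto
  then obtain a1 where a1: "a1 \<in> B" "g (b a1) < g (b a0)" using B unfolding Op_def by auto
  have "m \<le> g (b a1)" unfolding m_def using B a1 by auto
  then show False using a0 a1 by auto
qed

lemma lsc_slice1:
  assumes "upper_continuous X d" "x \<in> topspace X"
  shows "lsc X (\<lambda>z. d x z)"
  unfolding lsc_def
proof
  fix v
  have c: "continuous_map X (prod_topology X X) (\<lambda>z. (x, z))"
    using assms by (intro continuous_map_pairedI) auto
  have "openin X {z \<in> topspace X. (x, z) \<in> {p \<in> topspace X \<times> topspace X. v < d (fst p) (snd p)}}"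
    using openin_continuous_map_preimage[OF c] assms unfolding upper_continuous_def by blast
  moreover have "{z \<in> topspace X. (x, z) \<in> {p \<in> topspace X \<times> topspace X. v < d (fst p) (snd p)}}
     = {z \<in> topspace X. v < d x z}" using assms by auto
  ultimately show "openin X {z \<in> topspace X. v < d x z}" by simp
qed

lemma lsc_slice2:
  assumes "upper_continuous X d" "x \<in> topspace X"
  shows "lsc X (\<lambda>z. d z x)"
  unfolding lsc_def
proof
  fix v
  have c: "continuous_map X (prod_topology X X) (\<lambda>z. (z, x))"
    using assms by (intro continuous_map_pairedI) auto
  have "openin X {z \<in> topspace X. (z, x) \<in> {p \<in> topspace X \<times> topspace X. v < d (fst p) (snd p)}}"
    using openin_continuous_map_preimage[OF c] assms unfolding upper_continuous_def by blast
  moreover have "{z \<in> topspace X. (z, x) \<in> {p \<in> topspace X \<times> topspace X. v < d (fst p) (snd p)}}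
     = {z \<in> topspace X. v < d z x}" using assms by auto
  ultimately show "openin X {z \<in> topspace X. v < d z x}" by simp
qed

lemma uc_rect:
  assumes "upper_continuous X d" "x \<in> topspace X" "y \<in> topspace X" "v < d x y \<or> v = 0"
  shows "\<exists>U V. openin X U \<and> openin X V \<and> x \<in> U \<and> y \<in> V \<and> (\<forall>x'\<in>U. \<forall>y'\<in>V. v \<le> d x' y')"
proof (cases "v = 0")
  case True then show ?thesis using assms by (intro exI[of _ "topspace X"]) auto
next
  case False
  then have "v < d x y" using assms by auto
  then have "(x, y) \<in> {p \<in> topspace X \<times> topspace X. v < d (fst p) (snd p)}" using assms by auto
  then obtain U V where "openin X U" "openin X V" "x \<in> U" "y \<in> V"
     "U \<times> V \<subseteq> {p \<in> topspace X \<times> topspace X. v < d (fst p) (snd p)}"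
    using assms(1) unfolding upper_continuous_def openin_prod_topology_alt by meson
  then show ?thesis by (intro exI[of _ U] exI[of _ V]) fastforce
qed


locale MS =
  fixes X :: "'a topology" and d :: "'a \<Rightarrow> 'a \<Rightarrow> ennreal" and A :: "'a set"
  assumes ms: "metch_sep X d" and cl: "closedin X A"
begin

lemma A_sub: "A \<subseteq> topspace X" using cl closedin_subset by blast
lemma refl0: "x \<in> topspace X \<Longrightarrow> d x x = 0"
  using ms unfolding metch_sep_def is_metric_on_def by blast
lemma tri: "x \<in> topspace X \<Longrightarrow> y \<in> topspace X \<Longrightarrow> z \<in> topspace X \<Longrightarrow> d x z \<le> d x y + d y z"
  using ms unfolding metch_sep_def is_metric_on_def by blast
lemma sepd: "x \<in> topspace X \<Longrightarrow> y \<in> topspace X \<Longrightarrow> d x y = 0 \<Longrightarrow> d y x = 0 \<Longrightarrow> x = y"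
  using ms unfolding metch_sep_def separated_on_def by blast
lemma uc: "upper_continuous X d" using ms unfolding metch_sep_def by blast
lemma haus: "Hausdorff_space X" using ms unfolding metch_sep_def by blast
lemma cptX: "compact_space X" using ms unfolding metch_sep_def by blast
lemma cptA: "compactin X A"
  using closed_compactin[of X "topspace X" A] cptX cl A_sub unfolding compact_space_def by blast

definition F where "F x y = (INF a\<in>A. d x a + d a y)"

lemma F_le: "a \<in> A \<Longrightarrow> F x y \<le> d x a + d a y" unfolding F_def by (rule INF_lower)
lemma F_empty: "A = {} \<Longrightarrow> F x y = top" unfolding F_def by simp

lemma F_attain:
  assumes "x \<in> topspace X" "y \<in> topspace X" "A \<noteq> {}"
  shows "\<exists>a\<in>A. F x y = d x a + d a y"
proof -
  have "lsc X (\<lambda>a. d x a + d a y)"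
    by (intro lsc_sum lsc_slice1 lsc_slice2 uc assms)
  from lsc_attain[OF cptA \<open>A \<noteq> {}\<close> this] obtain a where a: "a \<in> A"
    "\<forall>b\<in>A. d x a + d a y \<le> d x b + d b y" by blast
  have "d x a + d a y \<le> F x y" unfolding F_def using a by (auto intro: INF_greatest)
  then show ?thesis using F_le[OF a(1), of x y] a(1) by (intro bexI[of _ a]) auto
qed

lemma d_le_F: "x \<in> topspace X \<Longrightarrow> y \<in> topspace X \<Longrightarrow> d x y \<le> F x y"
  unfolding F_def by (rule INF_greatest) (use tri A_sub in auto)

lemma F_A1: "x \<in> A \<Longrightarrow> y \<in> topspace X \<Longrightarrow> F x y = d x y"
  using F_le[of x x y] d_le_F[of x y] refl0[of x] A_sub by (auto intro: antisym)
lemma F_A2: "y \<in> A \<Longrightarrow> x \<in> topspace X \<Longrightarrow> F x y = d x y"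
  using F_le[of y x y] d_le_F[of x y] refl0[of y] A_sub by (auto intro: antisym)

lemma F_tri1:
  assumes "x \<in> topspace X" "y \<in> topspace X" "z \<in> topspace X"
  shows "F x z \<le> d x y + F y z"
proof (cases "A = {}")
  case True then show ?thesis using F_empty[OF True] by simp
next
  case False
  then obtain a where a: "a \<in> A" "F y z = d y a + d a z" using F_attain assms by blast
  have "F x z \<le> d x a + d a z" using F_le a by blast
  also have "\<dots> \<le> (d x y + d y a) + d a z" using tri assms a A_sub by (auto intro: add_right_mono)
  finally show ?thesis using a by (simp add: add.assoc)
qed

lemma F_tri2:
  assumes "x \<in> topspace X" "y \<in> topspace X" "z \<in> topspace X"
  shows "F x z \<le> F x y + d y z"
proof (cases "A = {}")
  case True then show ?thesis using F_empty[OF True] by simp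
next
  case False
  then obtain a where a: "a \<in> A" "F x y = d x a + d a y" using F_attain assms by blast
  have "F x z \<le> d x a + d a z" using F_le a by blast
  also have "\<dots> \<le> d x a + (d a y + d y z)" using tri assms a A_sub by (auto intro: add_left_mono)
  finally show ?thesis using a by (simp add: add.assoc)
qed

lemma F_tri3:
  assumes "x \<in> topspace X" "y \<in> topspace X" "z \<in> topspace X"
  shows "d x z \<le> F x y + F y z"
proof -
  have "d x z \<le> d x y + d y z" using tri assms by blast
  also have "\<dots> \<le> F x y + F y z" using d_le_F assms by (auto intro: add_mono)
  finally show ?thesis .
qed

lemma F_open: "openin (prod_topology X X) {p \<in> topspace X \<times> topspace X. u < F (fst p) (snd p)}"
  unfolding openin_prod_topology_alt
proof (intro allI impI)
  fix x y assume xy: "(x, y) \<in> {p \<in> topspace X \<times> topspace X. u < F (fst p) (snd p)}"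
  then have xT: "x \<in> topspace X" and yT: "y \<in> topspace X" and uF: "u < F x y" by auto
  show "\<exists>U V. openin X U \<and> openin X V \<and> x \<in> U \<and> y \<in> V \<and>
         U \<times> V \<subseteq> {p \<in> topspace X \<times> topspace X. u < F (fst p) (snd p)}"
  proof (cases "A = {}")
    case True
    then show ?thesis using uF xT yT F_empty[OF True] by (intro exI[of _ "topspace X"]) auto
  next
    case Ane: False
    obtain w where w: "u < w" "w < F x y" using uF dense by blast
    have "\<exists>U W V. openin X U \<and> openin X W \<and> openin X V \<and> x \<in> U \<and> a \<in> W \<and> y \<in> V \<and>
       (\<forall>x'\<in>U. \<forall>a'\<in>W. \<forall>y'\<in>V. w \<le> d x' a' + d a' y')" if a: "a \<in> A" for a
    proof -
      have aT: "a \<in> topspace X" using a A_sub by blast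
      have "w < d x a + d a y" using w F_le[OF a, of x y] by auto
      from interp[OF this] obtain v1 v2 where v: "v1 < d x a \<or> v1 = 0" "v2 < d a y \<or> v2 = 0"
        "w < v1 + v2" by blast
      obtain U W1 where R1: "openin X U" "openin X W1" "x \<in> U" "a \<in> W1"
        "\<forall>x'\<in>U. \<forall>a'\<in>W1. v1 \<le> d x' a'" using uc_rect[OF uc xT aT v(1)] by blast
      obtain W2 V where R2: "openin X W2" "openin X V" "a \<in> W2" "y \<in> V"
        "\<forall>a'\<in>W2. \<forall>y'\<in>V. v2 \<le> d a' y'" using uc_rect[OF uc aT yT v(2)] by blast
      have "\<forall>x'\<in>U. \<forall>a'\<in>W1 \<inter> W2. \<forall>y'\<in>V. w \<le> d x' a' + d a' y'"
      proof (intro ballI)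
        fix x' a' y' assume "x' \<in> U" "a' \<in> W1 \<inter> W2" "y' \<in> V"
        then have "v1 + v2 \<le> d x' a' + d a' y'" using R1 R2 by (auto intro: add_mono)
        then show "w \<le> d x' a' + d a' y'" using v(3) by auto
      qed
      then show ?thesis using R1 R2 by (intro exI[of _ U] exI[of _ "W1 \<inter> W2"] exI[of _ V]) auto
    qed
    then obtain U W V where UWV: "\<And>a. a \<in> A \<Longrightarrow> openin X (U a) \<and> openin X (W a) \<and> openin X (V a)
       \<and> x \<in> U a \<and> a \<in> W a \<and> y \<in> V a \<and>
       (\<forall>x'\<in>U a. \<forall>a'\<in>W a. \<forall>y'\<in>V a. w \<le> d x' a' + d a' y')" by metis
    have "\<exists>\<F>. finite \<F> \<and> \<F> \<subseteq> W ` A \<and> A \<subseteq> \<Union>\<F>"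
      by (rule compactinD[OF cptA]) (use UWV in auto)
    then obtain B where B: "finite B" "B \<subseteq> A" "A \<subseteq> \<Union> (W ` B)"
      by (metis finite_subset_image)
    have Bne: "B \<noteq> {}" using B Ane by auto
    define U0 where "U0 = \<Inter> (U ` B)"
    define V0 where "V0 = \<Inter> (V ` B)"
    have oU0: "openin X U0" unfolding U0_def using B Bne UWV by (intro openin_Inter) auto
    have oV0: "openin X V0" unfolding V0_def using B Bne UWV by (intro openin_Inter) auto
    have "x \<in> U0" "y \<in> V0" unfolding U0_def V0_def using UWV B by auto
    moreover have "U0 \<times> V0 \<subseteq> {p \<in> topspace X \<times> topspace X. u < F (fst p) (snd p)}"
    proof (clarsimp)
      fix x' y' assume x': "x' \<in> U0" and y': "y' \<in> V0"
      have "x' \<in> topspace X" "y' \<in> topspace X" using x' y' oU0 oV0 openin_subset by blast+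
      moreover have "w \<le> F x' y'" unfolding F_def
      proof (rule INF_greatest)
        fix a' assume "a' \<in> A"
        then obtain a where a: "a \<in> B" "a' \<in> W a" using B by blast
        then show "w \<le> d x' a' + d a' y'"
          using UWV[of a] B x' y' unfolding U0_def V0_def by blast
      qed
      ultimately show "x' \<in> topspace X \<and> y' \<in> topspace X \<and> u < F x' y'" using w by auto
    qed
    ultimately show ?thesis using oU0 oV0 by blast
  qed
qed


definition f1 :: "'a \<Rightarrow> 'a + 'a" where "f1 x = (if x \<in> A then Inl x else Inr x)"
definition C where "C = Inl ` topspace X \<union> Inr ` (topspace X - A)"
definition OP where "OP W \<longleftrightarrow> W \<subseteq> C \<and> openin X {x \<in> topspace X. Inl x \<in> W}
   \<and> openin X {x \<in> topspace X. f1 x \<in> W}"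

lemma istop: "istopology OP"
  unfolding istopology_def
proof (intro conjI allI impI)
  fix S T assume "OP S" "OP T"
  moreover have "{x \<in> topspace X. Inl x \<in> S \<inter> T} = {x \<in> topspace X. Inl x \<in> S} \<inter> {x \<in> topspace X. Inl x \<in> T}"
    by auto
  moreover have "{x \<in> topspace X. f1 x \<in> S \<inter> T} = {x \<in> topspace X. f1 x \<in> S} \<inter> {x \<in> topspace X. f1 x \<in> T}"
    by auto
  ultimately show "OP (S \<inter> T)" unfolding OP_def by auto
next
  fix K assume K: "\<forall>S\<in>K. OP S"
  have "{x \<in> topspace X. Inl x \<in> \<Union>K} = \<Union> ((\<lambda>S. {x \<in> topspace X. Inl x \<in> S}) ` K)" by auto
  moreover have "{x \<in> topspace X. f1 x \<in> \<Union>K} = \<Union> ((\<lambda>S. {x \<in> topspace X. f1 x \<in> S}) ` K)" by auto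
  ultimately show "OP (\<Union>K)" using K unfolding OP_def by (auto intro!: openin_Union)
qed

definition Y where "Y = topology OP"

lemma openY: "openin Y W \<longleftrightarrow> OP W" by (simp add: Y_def istop)

lemma OP_C: "OP C"
proof -
  have "{x \<in> topspace X. Inl x \<in> C} = topspace X" unfolding C_def by auto
  moreover have "{x \<in> topspace X. f1 x \<in> C} = topspace X" unfolding C_def f1_def by auto
  ultimately show ?thesis unfolding OP_def by auto
qed

lemma topY: "topspace Y = C"
  unfolding topspace_def openY using OP_C by (auto simp: OP_def)

definition prj :: "'a + 'a \<Rightarrow> 'a" where "prj p = case_sum id id p"

lemma prj_simps[simp]: "prj (Inl x) = x" "prj (Inr x) = x" by (simp_all add: prj_def)

lemma C_cases: "p \<in> C \<Longrightarrow> prj p \<in> topspace X \<and> (\<not> isl p \<longrightarrow> prj p \<notin> A)"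
  unfolding C_def by auto

lemma prj_eq: "isl p = isl q \<Longrightarrow> prj p = prj q \<Longrightarrow> p = q"
  by (cases p; cases q) auto

definition N where "N p U = (if prj p \<in> A then Inl ` U \<union> Inr ` (U - A)
   else if isl p then Inl ` (U - A) else Inr ` (U - A))"

lemma N_open:
  assumes U: "openin X U" shows "openin Y (N p U)"
proof -
  have UT: "U \<subseteq> topspace X" using U openin_subset by blast
  have UA: "openin X (U - A)" using U cl by blast
  show ?thesis unfolding openY OP_def
  proof (cases "prj p \<in> A")
    case True
    have "{x \<in> topspace X. Inl x \<in> N p U} = U" "{x \<in> topspace X. f1 x \<in> N p U} = U"
      using True UT unfolding N_def f1_def by auto
    moreover have "N p U \<subseteq> C" using True UT unfolding N_def C_def by auto
    ultimately show "N p U \<subseteq> C \<and> openin X {x \<in> topspace X. Inl x \<in> N p U} \<and>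
      openin X {x \<in> topspace X. f1 x \<in> N p U}" using U by simp
  next
    case False
    show "N p U \<subseteq> C \<and> openin X {x \<in> topspace X. Inl x \<in> N p U} \<and>
      openin X {x \<in> topspace X. f1 x \<in> N p U}"
    proof (cases "isl p")
      case True
      have e: "{x \<in> topspace X. Inl x \<in> N p U} = U - A" "{x \<in> topspace X. f1 x \<in> N p U} = {}"
        using True False UT unfolding N_def f1_def by auto
      moreover have "N p U \<subseteq> C" using True False UT unfolding N_def C_def by auto
      ultimately show ?thesis using UA unfolding e by simp
    next
      case nl: False
      have e: "{x \<in> topspace X. Inl x \<in> N p U} = {}" "{x \<in> topspace X. f1 x \<in> N p U} = U - A"
        using nl False UT unfolding N_def f1_def by auto
      moreover have "N p U \<subseteq> C" using nl False UT unfolding N_def C_def by auto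
      ultimately show ?thesis using UA unfolding e by simp
    qed
  qed
qed

lemma N_mem: "p \<in> C \<Longrightarrow> prj p \<in> U \<Longrightarrow> p \<in> N p U"
  unfolding N_def C_def by (cases p) auto

lemma N_prj: "p' \<in> N p U \<Longrightarrow> prj p' \<in> U"
  unfolding N_def by (auto split: if_splits)

lemma N_side: "p' \<in> N p U \<Longrightarrow> prj p \<notin> A \<Longrightarrow> isl p' = isl p"
  unfolding N_def by (auto split: if_splits)

lemma N_C: "openin X U \<Longrightarrow> p' \<in> N p U \<Longrightarrow> p' \<in> C"
  using N_open openin_subset topY by blast

abbreviation "gam \<equiv> gammaA d A"

lemma gam_eq: "gam p q = (if isl p = isl q then d (prj p) (prj q) else F (prj p) (prj q))"
  by (cases p; cases q) (simp_all add: F_def)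

lemma gam_ge_d: "prj p \<in> topspace X \<Longrightarrow> prj q \<in> topspace X \<Longrightarrow> d (prj p) (prj q) \<le> gam p q"
  using d_le_F by (simp add: gam_eq)

lemma gam_A: "prj p \<in> topspace X \<Longrightarrow> prj q \<in> topspace X \<Longrightarrow> prj p \<in> A \<or> prj q \<in> A
   \<Longrightarrow> gam p q = d (prj p) (prj q)"
  using F_A1 F_A2 by (auto simp: gam_eq)

lemma cont_Inl: "continuous_map X Y Inl"
  unfolding continuous_map_def topY using openY unfolding OP_def C_def by auto

lemma cont_f1: "continuous_map X Y f1"
  unfolding continuous_map_def topY using openY unfolding OP_def C_def f1_def by auto

lemma Y_compact: "compact_space Y"
proof -
  have "C = Inl ` topspace X \<union> f1 ` topspace X" unfolding C_def f1_def by auto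
  moreover have "compactin Y (Inl ` topspace X)" "compactin Y (f1 ` topspace X)"
    using image_compactin cont_Inl cont_f1 cptX unfolding compact_space_def by blast+
  ultimately show ?thesis unfolding compact_space_def topY by (simp add: compactin_Un)
qed

lemma Y_haus: "Hausdorff_space Y"
  unfolding Hausdorff_space_def topY
proof (intro allI impI)
  fix p q assume pq: "p \<in> C \<and> q \<in> C \<and> p \<noteq> q"
  show "\<exists>U V. openin Y U \<and> openin Y V \<and> p \<in> U \<and> q \<in> V \<and> disjnt U V"
  proof (cases "prj p = prj q")
    case False
    have Tp: "prj p \<in> topspace X" "prj q \<in> topspace X" using pq C_cases by auto
    obtain U V where UV: "openin X U" "openin X V" "prj p \<in> U" "prj q \<in> V" "disjnt U V"
      using haus False Tp unfolding Hausdorff_space_def by blast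
    have "disjnt (N p U) (N q V)"
      unfolding disjnt_def
    proof (rule equals0I)
      fix z assume "z \<in> N p U \<inter> N q V"
      then have "prj z \<in> U" "prj z \<in> V" using N_prj by blast+
      then show False using UV(5) unfolding disjnt_def by blast
    qed
    moreover have "openin Y (N p U)" "openin Y (N q V)" using N_open UV by auto
    moreover have "p \<in> N p U" "q \<in> N q V" using N_mem pq UV by auto
    ultimately show ?thesis by blast
  next
    case True
    then have side: "isl p \<noteq> isl q" using pq prj_eq by blast
    have "prj p \<notin> A"
    proof (cases "isl p")
      case True
      then have "\<not> isl q" using side by auto
      then show ?thesis using C_cases[of q] pq \<open>prj p = prj q\<close> by auto
    next
      case False
      then show ?thesis using C_cases[of p] pq by auto
    qed
    have "disjnt (N p (topspace X)) (N q (topspace X))"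
      unfolding disjnt_def
    proof (rule equals0I)
      fix z assume "z \<in> N p (topspace X) \<inter> N q (topspace X)"
      then have "isl z = isl p" "isl z = isl q"
        using N_side[of z p "topspace X"] N_side[of z q "topspace X"] \<open>prj p \<notin> A\<close> True by auto
      then show False using side by simp
    qed
    moreover have "p \<in> N p (topspace X)" "q \<in> N q (topspace X)"
      using pq N_mem[of p "topspace X"] N_mem[of q "topspace X"] C_cases[of p] C_cases[of q] by auto
    moreover have "openin Y (N p (topspace X))" "openin Y (N q (topspace X))" using N_open by auto
    ultimately show ?thesis by blast
  qed
qed

lemma Y_metric: "is_metric_on C gam"
  unfolding is_metric_on_def
proof (intro conjI ballI)
  fix p assume "p \<in> C" then show "gam p p = 0" using C_cases refl0 by (simp add: gam_eq)
next
  fix p q r assume "p \<in> C" "q \<in> C" "r \<in> C"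
  then have T: "prj p \<in> topspace X" "prj q \<in> topspace X" "prj r \<in> topspace X" using C_cases by auto
  show "gam p r \<le> gam p q + gam q r"
  proof -
    note f = tri[OF T] F_tri1[OF T] F_tri2[OF T] F_tri3[OF T]
    show ?thesis
      by (cases "isl p"; cases "isl q"; cases "isl r") (simp_all only: gam_eq if_True if_False simp_thms f)
  qed
qed

lemma Y_sep: "separated_on C gam"
  unfolding separated_on_def
proof (intro ballI impI)
  fix p q assume pq: "p \<in> C" "q \<in> C" and z: "gam p q = 0 \<and> gam q p = 0"
  have T: "prj p \<in> topspace X" "prj q \<in> topspace X" using pq C_cases by auto
  show "p = q"
  proof (cases "isl p = isl q")
    case True
    then show ?thesis using z sepd[OF T] prj_eq by (simp add: gam_eq)
  next
    case False
    then have F0: "F (prj p) (prj q) = 0" "F (prj q) (prj p) = 0" using z by (auto simp: gam_eq)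
    have nA: "prj p \<notin> A \<or> prj q \<notin> A"
    proof (cases "isl p")
      case True
      then have "\<not> isl q" using False by auto
      then show ?thesis using C_cases[of q] pq by auto
    next
      case False
      then show ?thesis using C_cases[of p] pq by auto
    qed
    have "A \<noteq> {}" using F0 F_empty by force
    then obtain a where a: "a \<in> A" "F (prj p) (prj q) = d (prj p) a + d a (prj q)"
      using F_attain T by blast
    have aT: "a \<in> topspace X" using a A_sub by auto
    have 1: "d (prj p) a = 0" "d a (prj q) = 0" using a F0 by auto
    have 2: "d (prj q) (prj p) = 0" using d_le_F[of "prj q" "prj p"] T F0 by simp
    have "d (prj q) a \<le> d (prj q) (prj p) + d (prj p) a" using tri T aT by blast
    then have 3: "d (prj q) a = 0" using 1 2 by simp
    have "d a (prj p) \<le> d a (prj q) + d (prj q) (prj p)" using tri T aT by blast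
    then have 4: "d a (prj p) = 0" using 1 2 by simp
    have "a = prj q" using sepd[OF aT T(2)] 1 3 by simp
    moreover have "a = prj p" using sepd[OF aT T(1)] 1 4 by simp
    ultimately show ?thesis using nA a by simp
  qed
qed


lemma Y_uc: "upper_continuous Y gam"
  unfolding upper_continuous_def openin_prod_topology_alt topY
proof (intro allI impI)
  fix u p q assume pq: "(p, q) \<in> {r \<in> C \<times> C. u < gam (fst r) (snd r)}"
  then have pC: "p \<in> C" "q \<in> C" and ug: "u < gam p q" by auto
  define x where "x = prj p"
  define y where "y = prj q"
  have xT: "x \<in> topspace X" and yT: "y \<in> topspace X" using pC C_cases x_def y_def by auto
  show "\<exists>U V. openin Y U \<and> openin Y V \<and> p \<in> U \<and> q \<in> V \<and> U \<times> V \<subseteq> {r \<in> C \<times> C. u < gam (fst r) (snd r)}"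
  proof (cases "u < d x y")
    case True
    obtain w where w: "u < w" "w < d x y" using True dense by blast
    obtain U V where UV: "openin X U" "openin X V" "x \<in> U" "y \<in> V"
      "\<forall>x'\<in>U. \<forall>y'\<in>V. w \<le> d x' y'" using uc_rect[OF uc xT yT, of w] w by auto
    have "\<forall>p'\<in>N p U. \<forall>q'\<in>N q V. p' \<in> C \<and> q' \<in> C \<and> u < gam p' q'"
    proof (intro ballI)
      fix p' q' assume p': "p' \<in> N p U" and q': "q' \<in> N q V"
      have C': "p' \<in> C" "q' \<in> C" using N_C[OF UV(1) p'] N_C[OF UV(2) q'] by auto
      have "prj p' \<in> U" "prj q' \<in> V" using N_prj[OF p'] N_prj[OF q'] by auto
      then have "w \<le> d (prj p') (prj q')" using UV(5) by simp
      also have "\<dots> \<le> gam p' q'" using gam_ge_d[of p' q'] C_cases[OF C'(1)] C_cases[OF C'(2)] by auto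
      finally show "p' \<in> C \<and> q' \<in> C \<and> u < gam p' q'" using C' w by auto
    qed
    then have "N p U \<times> N q V \<subseteq> {r \<in> C \<times> C. u < gam (fst r) (snd r)}" by auto
    moreover have "openin Y (N p U)" "openin Y (N q V)" using N_open UV by auto
    moreover have "p \<in> N p U" "q \<in> N q V" using N_mem[OF pC(1), of U] N_mem[OF pC(2), of V] UV x_def y_def by auto
    ultimately show ?thesis by blast
  next
    case False
    have sides: "isl p \<noteq> isl q"
    proof
      assume "isl p = isl q"
      then have "gam p q = d x y" by (simp add: gam_eq x_def y_def)
      then show False using ug False by simp
    qed
    have nA: "x \<notin> A" "y \<notin> A"
    proof -
      have "\<not> (x \<in> A \<or> y \<in> A)"
      proof
        assume "x \<in> A \<or> y \<in> A"
        then have "gam p q = d x y" using gam_A xT yT x_def y_def by blast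
        then show False using ug False by simp
      qed
      then show "x \<notin> A" "y \<notin> A" by auto
    qed
    have uF: "u < F x y" using ug sides by (simp add: gam_eq x_def y_def)
    then have "(x, y) \<in> {r \<in> topspace X \<times> topspace X. u < F (fst r) (snd r)}" using xT yT by auto
    then obtain U V where UV: "openin X U" "openin X V" "x \<in> U" "y \<in> V"
      "U \<times> V \<subseteq> {r \<in> topspace X \<times> topspace X. u < F (fst r) (snd r)}"
      using F_open[of u, unfolded openin_prod_topology_alt, rule_format, of x y] by blast
    have "\<forall>p'\<in>N p U. \<forall>q'\<in>N q V. p' \<in> C \<and> q' \<in> C \<and> u < gam p' q'"
    proof (intro ballI)
      fix p' q' assume p': "p' \<in> N p U" and q': "q' \<in> N q V"
      have C': "p' \<in> C" "q' \<in> C" using N_C[OF UV(1) p'] N_C[OF UV(2) q'] by auto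
      have "prj p' \<in> U" "prj q' \<in> V" using N_prj[OF p'] N_prj[OF q'] by auto
      then have "(prj p', prj q') \<in> U \<times> V" by simp
      then have "u < F (prj p') (prj q')" using UV(5) by auto
      moreover have "isl p' = isl p" "isl q' = isl q"
        using N_side[OF p'] N_side[OF q'] nA x_def y_def by auto
      ultimately have "u < gam p' q'" using sides by (simp add: gam_eq)
      then show "p' \<in> C \<and> q' \<in> C \<and> u < gam p' q'" using C' by auto
    qed
    then have "N p U \<times> N q V \<subseteq> {r \<in> C \<times> C. u < gam (fst r) (snd r)}" by auto
    moreover have "openin Y (N p U)" "openin Y (N q V)" using N_open UV by auto
    moreover have "p \<in> N p U" "q \<in> N q V" using N_mem[OF pC(1), of U] N_mem[OF pC(2), of V] UV x_def y_def by auto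
    ultimately show ?thesis by blast
  qed
qed

lemma Y_mch: "metch_sep Y gam"
  unfolding metch_sep_def topY using Y_compact Y_haus Y_metric Y_sep Y_uc by blast

lemma mor_Inl: "metch_mor X d Y gam Inl"
  unfolding metch_mor_def using cont_Inl by simp

lemma gam_f1: "x \<in> topspace X \<Longrightarrow> y \<in> topspace X \<Longrightarrow> gam (f1 x) (f1 y) = d x y"
  by (cases "x \<in> A"; cases "y \<in> A") (simp_all add: f1_def F_def[symmetric] F_A1 F_A2)

lemma mor_f1: "metch_mor X d Y gam f1"
  unfolding metch_mor_def using cont_f1 gam_f1 by simp

lemma gam_g:
  assumes "p \<in> topspace X <+> topspace X" "q \<in> topspace X <+> topspace X"
  shows "gam (case_sum Inl f1 p) (case_sum Inl f1 q) = gam p q"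
proof -
  have P1: "prj (case_sum Inl f1 p) = prj p" by (cases p) (simp_all add: f1_def)
  have P2: "prj (case_sum Inl f1 q) = prj q" by (cases q) (simp_all add: f1_def)
  note P = P1 P2
  have T: "prj p \<in> topspace X" "prj q \<in> topspace X" using assms by auto
  show ?thesis
  proof (cases "prj p \<in> A \<or> prj q \<in> A")
    case True
    then show ?thesis using gam_A[of p q] gam_A[of "case_sum Inl f1 p" "case_sum Inl f1 q"] P T by simp
  next
    case False
    have "case_sum Inl f1 p = p" using False by (cases p) (simp_all add: f1_def)
    moreover have "case_sum Inl f1 q = q" using False by (cases q) (simp_all add: f1_def)
    ultimately show ?thesis by simp
  qed
qed

end

theorem lemma5p11:
  fixes X :: "'a topology" and d :: "'a \<Rightarrow> 'a \<Rightarrow> ennreal" and A :: "'a set"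
    and P :: "'p topology" and dP :: "'p \<Rightarrow> 'p \<Rightarrow> ennreal" and q0 q1 :: "'a \<Rightarrow> 'p"
  assumes "metch_sep X d"
    and "closedin X A"
    and "is_pushout_incl X d A P dP q0 q1"
  shows "\<forall>u\<in>topspace X <+> topspace X. \<forall>v\<in>topspace X <+> topspace X.
           kernel_metric dP (case_sum q0 q1) u v = gammaA d A u v"
proof -
  interpret MS X d A using assms(1,2) by unfold_locales
  have mP: "metch_sep P dP" and m0: "metch_mor X d P dP q0" and m1: "metch_mor X d P dP q1"
    and agr: "\<forall>a\<in>A. q0 a = q1 a"
    and univ: "\<forall>(Y :: ('a + 'a) topology) e f0 f1.
        metch_sep Y e \<and> metch_mor X d Y e f0 \<and> metch_mor X d Y e f1 \<and>
        (\<forall>a\<in>A. f0 a = f1 a) \<longrightarrow>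
          (\<exists>u. metch_mor P dP Y e u \<and>
               (\<forall>x\<in>topspace X. u (q0 x) = f0 x \<and> u (q1 x) = f1 x)) \<and>
          (\<forall>u v. metch_mor P dP Y e u \<and>
               (\<forall>x\<in>topspace X. u (q0 x) = f0 x \<and> u (q1 x) = f1 x) \<and>
               metch_mor P dP Y e v \<and>
               (\<forall>x\<in>topspace X. v (q0 x) = f0 x \<and> v (q1 x) = f1 x) \<longrightarrow>
               (\<forall>p\<in>topspace P. u p = v p))"
    using assms(3) unfolding is_pushout_incl_def by blast+
  have agr2: "\<forall>a\<in>A. Inl a = f1 a" by (simp add: f1_def)
  obtain h where h: "metch_mor P dP Y gam h"
    "\<forall>x\<in>topspace X. h (q0 x) = Inl x \<and> h (q1 x) = f1 x"
    using univ[rule_format, OF conjI[OF Y_mch conjI[OF mor_Inl conjI[OF mor_f1 agr2]]]] by blast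
  have trP: "\<And>a b c. a \<in> topspace P \<Longrightarrow> b \<in> topspace P \<Longrightarrow> c \<in> topspace P \<Longrightarrow> dP a c \<le> dP a b + dP b c"
    using mP unfolding metch_sep_def is_metric_on_def by blast
  have c0: "\<And>x. x \<in> topspace X \<Longrightarrow> q0 x \<in> topspace P" and c1: "\<And>x. x \<in> topspace X \<Longrightarrow> q1 x \<in> topspace P"
    using m0 m1 unfolding metch_mor_def continuous_map_def by auto
  have n0: "\<And>x y. x \<in> topspace X \<Longrightarrow> y \<in> topspace X \<Longrightarrow> dP (q0 x) (q0 y) \<le> d x y"
    using m0 unfolding metch_mor_def by blast
  have n1: "\<And>x y. x \<in> topspace X \<Longrightarrow> y \<in> topspace X \<Longrightarrow> dP (q1 x) (q1 y) \<le> d x y"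
    using m1 unfolding metch_mor_def by blast
  have nh: "\<And>a b. a \<in> topspace P \<Longrightarrow> b \<in> topspace P \<Longrightarrow> gam (h a) (h b) \<le> dP a b"
    using h(1) unfolding metch_mor_def by blast
  show ?thesis
  proof (intro ballI)
    fix p q assume p: "p \<in> topspace X <+> topspace X" and q: "q \<in> topspace X <+> topspace X"
    have hP: "case_sum q0 q1 p \<in> topspace P" "case_sum q0 q1 q \<in> topspace P"
      using p q c0 c1 by auto
    have hg: "h (case_sum q0 q1 p) = case_sum Inl f1 p" "h (case_sum q0 q1 q) = case_sum Inl f1 q"
      using p q h(2) by auto
    have lower: "gam p q \<le> dP (case_sum q0 q1 p) (case_sum q0 q1 q)"
      using nh[OF hP] hg gam_g[OF p q] by simp
    have cross01: "dP (q0 x) (q1 y) \<le> d x a + d a y"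
      if "x \<in> topspace X" "y \<in> topspace X" "a \<in> A" for x y a
    proof -
      have aT: "a \<in> topspace X" using that A_sub by auto
      have "dP (q0 x) (q1 y) \<le> dP (q0 x) (q0 a) + dP (q0 a) (q1 y)"
        using trP c0 c1 that aT by blast
      also have "\<dots> = dP (q0 x) (q0 a) + dP (q1 a) (q1 y)" using agr that by simp
      also have "\<dots> \<le> d x a + d a y" using n0 n1 that aT by (intro add_mono) auto
      finally show ?thesis .
    qed
    have cross10: "dP (q1 x) (q0 y) \<le> d x a + d a y"
      if "x \<in> topspace X" "y \<in> topspace X" "a \<in> A" for x y a
    proof -
      have aT: "a \<in> topspace X" using that A_sub by auto
      have "dP (q1 x) (q0 y) \<le> dP (q1 x) (q1 a) + dP (q1 a) (q0 y)"
        using trP c0 c1 that aT by blast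
      also have "\<dots> = dP (q1 x) (q1 a) + dP (q0 a) (q0 y)" using agr that by simp
      also have "\<dots> \<le> d x a + d a y" using n0 n1 that aT by (intro add_mono) auto
      finally show ?thesis .
    qed
    have upper: "dP (case_sum q0 q1 p) (case_sum q0 q1 q) \<le> gam p q"
    proof (cases p; cases q)
      fix x y assume "p = Inl x" "q = Inl y" then show ?thesis using p q n0 by auto
    next
      fix x y assume "p = Inr x" "q = Inr y" then show ?thesis using p q n1 by auto
    next
      fix x y assume e: "p = Inl x" "q = Inr y"
      then have "x \<in> topspace X" "y \<in> topspace X" using p q by auto
      then show ?thesis using e cross01 by (auto intro!: INF_greatest)
    next
      fix x y assume e: "p = Inr x" "q = Inl y"
      then have "x \<in> topspace X" "y \<in> topspace X" using p q by auto
      then show ?thesis using e cross10 by (auto intro!: INF_greatest)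
    qed
    show "kernel_metric dP (case_sum q0 q1) p q = gammaA d A p q"
      unfolding kernel_metric_def using lower upper by (rule antisym[rotated])
  qed
qed

end
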